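(* Let $q$ be a prime power and let $\Gamma$ be a projective bundle in $\mathrm{PG}(2,q)$. Then every line $\ell$ of $\mathrm{PG}(2,q)$ has exactly $q+1$ tangent ovals in $\Gamma$, exactly one through each point of $\ell$. Moreover: if $q$ is even, all the $q+1$ tangent ovals of $\ell$ pass through a common point; if $q$ is odd, every point not on $\ell$ lies on either zero or exactly two of the tangent ovals of $\ell$.
   Context: $\mathrm{PG}(2,q)$ is the projective plane whose points and lines are the 1- and 2-dimensional subspaces of $\mathbb{F}_q^3$ (it has $q^2+q+1$ points, each line has $q+1$ points). An oval is a set of $q+1$ points of $\mathrm{PG}(2,q)$ such that every line meets it in at most two points. A projective bundle is a collection of $q^2+q+1$ ovals of $\mathrm{PG}(2,q)$ any two of which intersect in exactly one point. An oval of $\Gamma$ is tangent to a line $\ell$ if it meets $\ell$ in exactly one point. *)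

theory Defs
  imports Main "HOL-Library.Cardinality"
begin

text \<open>The projective plane PG(2,q) over a finite field 'a with q = CARD('a).
  Vectors of F_q^3 are triples; points are 1-dimensional subspaces and lines
  are 2-dimensional subspaces, both represented as sets of vectors.
  A point is incident with a line iff the subspace is contained in it.\<close>

type_synonym 'a vec3 = "'a \<times> 'a \<times> 'a"

definition smul3 :: "'a::field \<Rightarrow> 'a vec3 \<Rightarrow> 'a vec3" where
  "smul3 c v = (case v of (x, y, z) \<Rightarrow> (c * x, c * y, c * z))"

definition add3 :: "'a::field vec3 \<Rightarrow> 'a vec3 \<Rightarrow> 'a vec3" where
  "add3 u w = (case u of (x, y, z) \<Rightarrow> case w of (x', y', z') \<Rightarrow> (x + x', y + y', z + z'))"

definition zero3 :: "'a::field vec3" where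
  "zero3 = (0, 0, 0)"

definition span1 :: "'a::field vec3 \<Rightarrow> 'a vec3 set" where
  "span1 v = {smul3 c v | c. True}"

definition span2 :: "'a::field vec3 \<Rightarrow> 'a vec3 \<Rightarrow> 'a vec3 set" where
  "span2 u w = {add3 (smul3 s u) (smul3 t w) | s t. True}"

definition lin_indep2 :: "'a::field vec3 \<Rightarrow> 'a vec3 \<Rightarrow> bool" where
  "lin_indep2 u w \<longleftrightarrow> (\<forall>s t. add3 (smul3 s u) (smul3 t w) = zero3 \<longrightarrow> s = 0 \<and> t = 0)"

definition pg_points :: "'a::field vec3 set set" where
  "pg_points = {span1 v | v. v \<noteq> zero3}"

definition pg_lines :: "'a::field vec3 set set" where
  "pg_lines = {span2 u w | u w. lin_indep2 u w}"

definition on_line :: "'a vec3 set set \<Rightarrow> 'a vec3 set \<Rightarrow> 'a vec3 set set" where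
  "on_line C l = {P \<in> C. P \<subseteq> l}"

definition is_oval :: "'a::{finite,field} vec3 set set \<Rightarrow> bool" where
  "is_oval C \<longleftrightarrow> C \<subseteq> pg_points \<and> card C = CARD('a) + 1 \<and>
     (\<forall>l \<in> pg_lines. card (on_line C l) \<le> 2)"

definition projective_bundle :: "'a::{finite,field} vec3 set set set \<Rightarrow> bool" where
  "projective_bundle \<Gamma> \<longleftrightarrow> (\<forall>C \<in> \<Gamma>. is_oval C) \<and>
     card \<Gamma> = CARD('a)^2 + CARD('a) + 1 \<and>
     (\<forall>C1 \<in> \<Gamma>. \<forall>C2 \<in> \<Gamma>. C1 \<noteq> C2 \<longrightarrow> card (C1 \<inter> C2) = 1)"

definition tangent :: "'a vec3 set set \<Rightarrow> 'a vec3 set \<Rightarrow> bool" where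
  "tangent C l \<longleftrightarrow> card (on_line C l) = 1"

end

theory Submission
  imports Defs
begin


lemma card_filter_sum: "finite A \<Longrightarrow> card {x\<in>A. P x} = (\<Sum>x\<in>A. if P x then 1 else 0)"
  by (simp add: sum.inter_filter[symmetric])

lemma dcount:
  assumes "finite A" "finite I"
  shows "(\<Sum>X\<in>A. card {i\<in>I. X \<in> S i}) = (\<Sum>i\<in>I. card (S i \<inter> A))"
proof -
  have "(\<Sum>X\<in>A. card {i\<in>I. X \<in> S i}) = (\<Sum>X\<in>A. \<Sum>i\<in>I. if X \<in> S i then 1 else 0)"
    using assms by (simp add: card_filter_sum)
  also have "\<dots> = (\<Sum>i\<in>I. \<Sum>X\<in>A. if X \<in> S i then 1 else 0)"
    by (rule sum.swap)
  also have "\<dots> = (\<Sum>i\<in>I. card (S i \<inter> A))"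
    using assms by (simp add: card_filter_sum[symmetric] Int_def conj_commute)
  finally show ?thesis .
qed

lemma offdiag_card:
  assumes "finite B"
  shows "card {(a,b)\<in>B\<times>B. a \<noteq> b} = card B * (card B - 1)"
proof -
  have e: "{(a,b)\<in>B\<times>B. a \<noteq> b} = B\<times>B - (\<lambda>a. (a,a)) ` B" by auto
  have "card ((\<lambda>a. (a,a)) ` B) = card B" by (rule card_image) (auto simp: inj_on_def)
  then have "card {(a,b)\<in>B\<times>B. a \<noteq> b} = card B * card B - card B"
    unfolding e using assms by (subst card_Diff_subset) (auto simp: card_cartesian_product)
  then show ?thesis by (simp add: diff_mult_distrib2)
qed

lemma all_max:
  fixes f :: "'b \<Rightarrow> nat"
  assumes "finite A" "\<forall>x\<in>A. f x \<le> k" "sum f A = card A * k"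
  shows "\<forall>x\<in>A. f x = k"
proof (rule ccontr)
  assume "\<not> ?thesis"
  then have "\<exists>x\<in>A. f x < k" using assms(2) by force
  then have "sum f A < sum (\<lambda>_. k) A" using assms by (intro sum_strict_mono_ex1) auto
  then show False using assms(3) by simp
qed

lemma sq_lemma:
  fixes a :: "'b \<Rightarrow> int"
  assumes "finite A" "\<forall>x\<in>A. a x \<ge> 0" "(\<Sum>x\<in>A. a x * a x) = (sum a A) * (sum a A)" "sum a A > 0"
  shows "\<exists>x\<in>A. a x = sum a A"
proof -
  define S where "S = sum a A"
  have le: "a x \<le> S" if "x \<in> A" for x
    unfolding S_def using assms that by (intro member_le_sum) auto
  have "(\<Sum>x\<in>A. a x * (S - a x)) = (\<Sum>x\<in>A. a x * S) - (\<Sum>x\<in>A. a x * a x)"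
    by (simp add: right_diff_distrib sum_subtractf)
  also have "\<dots> = 0" using assms(3) unfolding S_def by (simp add: sum_distrib_right)
  finally have z: "(\<Sum>x\<in>A. a x * (S - a x)) = 0" .
  have "\<forall>x\<in>A. a x * (S - a x) = 0"
    using z assms le by (subst sum_nonneg_eq_0_iff[symmetric]) auto
  moreover have "\<not> (\<forall>x\<in>A. a x = 0)"
  proof
    assume "\<forall>x\<in>A. a x = 0"
    then have "sum a A = 0" by (intro sum.neutral) auto
    with assms(4) show False by simp
  qed
  then obtain x where "x \<in> A" "a x \<noteq> 0" by auto
  ultimately have h: "a x * (S - a x) = 0" "x \<in> A" "a x \<noteq> 0" unfolding S_def by auto
  then have "S - a x = 0" by simp
  then have "a x = S" by simp
  then show ?thesis using h(2) unfolding S_def by blast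
qed

lemma card1_ex1: assumes "card {x. P x} = 1" shows "\<exists>!x. P x"
proof -
  obtain y where y: "{x. P x} = {y}" using assms by (auto simp: card_1_singleton_iff)
  have "P x \<longleftrightarrow> x = y" for x using y by (metis mem_Collect_eq singleton_iff)
  then show ?thesis by auto
qed

locale babs =
  fixes Pts :: "'p set" and G :: "'p set set" and L :: "'p set" and q :: nat
  assumes finP: "finite Pts"
    and cardP: "card Pts = q*q + q + 1"
    and subG: "\<And>C. C \<in> G \<Longrightarrow> C \<subseteq> Pts"
    and cardC: "\<And>C. C \<in> G \<Longrightarrow> card C = q + 1"
    and cardG: "card G = q*q + q + 1"
    and inter1: "\<And>C D. C \<in> G \<Longrightarrow> D \<in> G \<Longrightarrow> C \<noteq> D \<Longrightarrow> card (C \<inter> D) = 1"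
    and subL: "L \<subseteq> Pts"
    and cardL: "card L = q + 1"
    and sec: "\<And>C. C \<in> G \<Longrightarrow> card (C \<inter> L) \<le> 2"
    and qpos: "q \<ge> 1"
begin

definition "thr P = {C \<in> G. P \<in> C}"

lemma finG: "finite G"
proof (rule ccontr)
  assume "infinite G"
  then have "card G = 0" by simp
  with cardG show False by simp
qed

lemma finC: "C \<in> G \<Longrightarrow> finite C"
  using subG finP finite_subset by blast

lemma finthr: "finite (thr P)" unfolding thr_def using finG by simp

lemma int_pt: assumes "C \<in> G" "D \<in> G" "C \<noteq> D" "P \<in> C" "P \<in> D" shows "C \<inter> D = {P}"
proof -
  have "card (C \<inter> D) = 1" by (rule inter1[OF assms(1-3)])
  then obtain x where x: "C \<inter> D = {x}" by (auto simp: card_1_singleton_iff)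
  have "P \<in> C \<inter> D" using assms(4,5) by simp
  then have "P = x" using x by simp
  then show ?thesis using x by simp
qed

lemma same_pt: "C \<in> G \<Longrightarrow> D \<in> G \<Longrightarrow> C \<noteq> D \<Longrightarrow> P \<in> C \<Longrightarrow> P \<in> D \<Longrightarrow> P' \<in> C \<Longrightarrow> P' \<in> D \<Longrightarrow> P' = P"
proof -
  assume a: "C \<in> G" "D \<in> G" "C \<noteq> D" "P \<in> C" "P \<in> D" "P' \<in> C" "P' \<in> D"
  then have "P' \<in> C \<inter> D" by blast
  then show "P' = P" using int_pt[OF a(1-5)] by blast
qed

lemma disj_thr: assumes "C \<in> thr P" "D \<in> thr P" "C \<noteq> D" shows "(C - {P}) \<inter> (D - {P}) = {}"
proof -
  have h: "C \<in> G" "D \<in> G" "P \<in> C" "P \<in> D" using assms(1,2) unfolding thr_def by auto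
  have "C \<inter> D = {P}" by (rule int_pt[OF h(1,2) assms(3) h(3,4)])
  then show ?thesis by blast
qed

lemma disj_thr2: assumes "C \<in> thr P" "D \<in> thr P" "C \<noteq> D" "P \<notin> X"
  shows "(C \<inter> X) \<inter> (D \<inter> X) = {}"
proof -
  have h: "C \<in> G" "D \<in> G" "P \<in> C" "P \<in> D" using assms(1,2) unfolding thr_def by auto
  have e: "C \<inter> D = {P}" by (rule int_pt[OF h(1,2) assms(3) h(3,4)])
  show ?thesis
  proof (rule equals0I)
    fix y assume "y \<in> (C \<inter> X) \<inter> (D \<inter> X)"
    then have "y \<in> C \<inter> D" "y \<in> X" by auto
    then show False using e assms(4) by auto
  qed
qed

lemma disj_r: assumes C: "C \<in> G" and ij: "i \<in> C" "j \<in> C" "i \<noteq> j"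
  shows "(thr i - {C}) \<inter> (thr j - {C}) = {}"
proof (rule equals0I)
  fix D assume "D \<in> (thr i - {C}) \<inter> (thr j - {C})"
  then have D: "D \<in> G" "i \<in> D" "j \<in> D" "C \<noteq> D" unfolding thr_def by auto
  have "j = i" by (rule same_pt[OF C D(1) D(4) ij(1) D(2) ij(2) D(3)])
  then show False using ij(3) by simp
qed

lemma card_minus: "C \<in> thr P \<Longrightarrow> card (C - {P}) = q"
  unfolding thr_def using cardC finC by auto

lemma union_card: "card (\<Union>C\<in>thr P. C - {P}) = q * card (thr P)"
proof -
  have "card (\<Union>C\<in>thr P. C - {P}) = (\<Sum>C\<in>thr P. card (C - {P}))"
    apply (rule card_UN_disjoint)
    using finthr apply simp
    using finC apply (simp add: thr_def)
    using disj_thr by blast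
  also have "\<dots> = (\<Sum>C\<in>thr P. q)" using card_minus by simp
  finally show ?thesis by simp
qed

lemma r_le: "P \<in> Pts \<Longrightarrow> card (thr P) \<le> q + 1"
proof -
  assume P: "P \<in> Pts"
  have "(\<Union>C\<in>thr P. C - {P}) \<subseteq> Pts - {P}" unfolding thr_def using subG by blast
  then have "card (\<Union>C\<in>thr P. C - {P}) \<le> card (Pts - {P})" using finP by (intro card_mono) auto
  then have "q * card (thr P) \<le> q * (q + 1)" using union_card cardP P finP by simp
  then have "0 < q \<longrightarrow> card (thr P) \<le> q+1" by (simp only: mult_le_cancel1)
  then show ?thesis using qpos by simp
qed

lemma r_on: assumes C: "C \<in> G" and P: "P \<in> C" shows "card (thr P) = q + 1"
proof -
  define f where "f P = card (thr P - {C})" for P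
  have U: "G - {C} = (\<Union>P\<in>C. thr P - {C})"
  proof
    show "G - {C} \<subseteq> (\<Union>P\<in>C. thr P - {C})"
    proof
      fix D assume D: "D \<in> G - {C}"
      then have "card (C \<inter> D) = 1" using inter1 C by auto
      then obtain x where "C \<inter> D = {x}" by (auto simp: card_1_singleton_iff)
      then show "D \<in> (\<Union>P\<in>C. thr P - {C})" using D unfolding thr_def by auto
    qed
  qed (auto simp: thr_def)
  have "card (G - {C}) = (\<Sum>P\<in>C. f P)" unfolding U f_def
    apply (rule card_UN_disjoint)
    using finC[OF C] apply simp
    using finthr apply simp
    using disj_r[OF C] by blast
  then have s: "sum f C = card C * q" using cardG C finG cardC[OF C] by simp
  have "\<forall>x\<in>C. f x \<le> q"
  proof
    fix x assume x: "x \<in> C"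
    then have "C \<in> thr x" using C unfolding thr_def by auto
    then have "f x = card (thr x) - 1" unfolding f_def using finthr by simp
    then show "f x \<le> q" using r_le[of x] x subG[OF C] by auto
  qed
  then have "\<forall>x\<in>C. f x = q" using all_max[OF finC[OF C]] s by blast
  then have "f P = q" using P by auto
  moreover have "C \<in> thr P" using C P unfolding thr_def by auto
  moreover have "card (thr P - {C}) = card (thr P) - 1" using \<open>C \<in> thr P\<close> by (rule card_Diff_singleton)
  moreover have "card (thr P) > 0" using finthr \<open>C \<in> thr P\<close> card_gt_0_iff by blast
  ultimately show ?thesis unfolding f_def by linarith
qed

lemma cover0: assumes P: "P \<in> Pts" "card (thr P) = q + 1" and X: "X \<in> Pts" "X \<noteq> P"
  shows "\<exists>C\<in>G. P \<in> C \<and> X \<in> C"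
proof -
  have sub: "(\<Union>C\<in>thr P. C - {P}) \<subseteq> Pts - {P}" unfolding thr_def using subG by blast
  have "card (\<Union>C\<in>thr P. C - {P}) = card (Pts - {P})" using union_card P cardP finP by simp
  then have "(\<Union>C\<in>thr P. C - {P}) = Pts - {P}" using sub finP by (intro card_subset_eq) auto
  moreover have "X \<in> Pts - {P}" using X by simp
  ultimately obtain C where "C \<in> thr P" "X \<in> C" by blast
  then show ?thesis unfolding thr_def by blast
qed

lemma r_all: assumes "P \<in> Pts" shows "card (thr P) = q + 1"
proof -
  have "G \<noteq> {}" using cardG by auto
  then obtain C0 where C0: "C0 \<in> G" by auto
  then have "C0 \<noteq> {}" using cardC[OF C0] by auto
  then obtain P0 where P0: "P0 \<in> C0" by auto
  have r0: "card (thr P0) = q + 1" using r_on C0 P0 by auto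
  show ?thesis
  proof (cases "P = P0")
    case True then show ?thesis using r0 by simp
  next
    case False
    have "P0 \<in> Pts" using subG[OF C0] P0 by blast
    then obtain C where "C \<in> G" "P \<in> C" using cover0[OF _ r0 assms False] by blast
    then show ?thesis using r_on by blast
  qed
qed

lemma cover: assumes "P \<in> Pts" "X \<in> Pts" "X \<noteq> P" shows "\<exists>C\<in>G. P \<in> C \<and> X \<in> C"
  using cover0[OF assms(1) r_all[OF assms(1)] assms(2,3)] .

lemma cover_set: assumes "P \<in> Pts" "Y \<subseteq> Pts" "P \<notin> Y" shows "Y = (\<Union>D\<in>thr P. D \<inter> Y)"
proof (intro equalityI subsetI)
  fix X assume X: "X \<in> Y"
  then have "X \<in> Pts" "X \<noteq> P" using assms by auto
  then obtain D where "D \<in> G" "P \<in> D" "X \<in> D" using cover[OF assms(1)] by blast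
  then show "X \<in> (\<Union>D\<in>thr P. D \<inter> Y)" using X unfolding thr_def by blast
qed blast

definition "Tg = {C \<in> G. card (C \<inter> L) = 1}"

lemma tang_at: assumes P: "P \<in> L" shows "card {C \<in> G. card (C \<inter> L) = 1 \<and> P \<in> C} = 1"
proof -
  define f where "f D = card (D \<inter> (L - {P}))" for D
  define Z where "Z = {D \<in> thr P. f D = 0}"
  have PP: "P \<in> Pts" using P subL by auto
  have f1: "f D \<le> 1" if "D \<in> thr P" for D
  proof -
    have D: "D \<in> G" "P \<in> D" using that unfolding thr_def by auto
    have "D \<inter> L = insert P (D \<inter> (L - {P}))" using D P by auto
    then have "card (D \<inter> L) = Suc (f D)" unfolding f_def using finC[OF D(1)] by simp
    then show ?thesis using sec[OF D(1)] by simp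
  qed
  have U: "L - {P} = (\<Union>D\<in>thr P. D \<inter> (L - {P}))"
    using cover_set[OF PP] subL by blast
  have "card (L - {P}) = sum f (thr P)" unfolding f_def
    apply (subst U, rule card_UN_disjoint)
    using finthr apply simp
    using finC apply (simp add: thr_def)
    by (intro ballI impI disj_thr2) auto
  then have s: "sum f (thr P) = q" using cardL P by simp
  have ZA: "Z \<subseteq> thr P" unfolding Z_def by auto
  have "sum f (thr P) = sum f (thr P - Z) + sum f Z"
    by (rule sum.subset_diff[OF ZA finthr])
  also have "sum f Z = 0" unfolding Z_def by simp
  also have "sum f (thr P - Z) = card (thr P - Z)"
  proof -
    have "f D = 1" if "D \<in> thr P - Z" for D using f1[of D] that unfolding Z_def by auto
    then have "sum f (thr P - Z) = sum (\<lambda>_. 1) (thr P - Z)" by (rule sum.cong[OF refl])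
    then show ?thesis by simp
  qed
  finally have "card (thr P - Z) = q" using s by simp
  moreover have "finite Z" using finthr ZA by (rule finite_subset[rotated])
  moreover have "card Z \<le> card (thr P)" using finthr ZA by (intro card_mono)
  ultimately have cZ: "card Z = 1" using r_all[OF PP] card_Diff_subset[OF _ ZA] by linarith
  have "Z = {C \<in> G. card (C \<inter> L) = 1 \<and> P \<in> C}"
  proof -
    have "f D = 0 \<longleftrightarrow> card (D \<inter> L) = 1" if "D \<in> G" "P \<in> D" for D
    proof -
      have "D \<inter> L = insert P (D \<inter> (L - {P}))" using that P by auto
      then have "card (D \<inter> L) = Suc (f D)" unfolding f_def using finC[OF that(1)] by simp
      then show ?thesis by simp
    qed
    note fz = this
    show ?thesis
    proof (intro equalityI subsetI)
      fix D assume "D \<in> Z"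
      then have D: "D \<in> G" "P \<in> D" "f D = 0" unfolding Z_def thr_def by auto
      then have "card (D \<inter> L) = 1" using fz by blast
      then show "D \<in> {C \<in> G. card (C \<inter> L) = 1 \<and> P \<in> C}" using D by blast
    next
      fix D assume "D \<in> {C \<in> G. card (C \<inter> L) = 1 \<and> P \<in> C}"
      then have D: "D \<in> G" "P \<in> D" "card (D \<inter> L) = 1" by auto
      then have "f D = 0" using fz by blast
      then show "D \<in> Z" using D unfolding Z_def thr_def by blast
    qed
  qed
  then show ?thesis using cZ by simp
qed

lemma tang_unique: assumes "P \<in> L" shows "\<exists>!C. C \<in> G \<and> card (C \<inter> L) = 1 \<and> P \<in> C"
  using tang_at[OF assms] by (rule card1_ex1)

lemma tg_disj: assumes "P \<in> L" "P' \<in> L" "P \<noteq> P'"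
  shows "{C \<in> G. card (C \<inter> L) = 1 \<and> P \<in> C} \<inter> {C \<in> G. card (C \<inter> L) = 1 \<and> P' \<in> C} = {}"
proof (rule equals0I)
  fix C assume "C \<in> {C \<in> G. card (C \<inter> L) = 1 \<and> P \<in> C} \<inter> {C \<in> G. card (C \<inter> L) = 1 \<and> P' \<in> C}"
  then have C: "card (C \<inter> L) = 1" "P \<in> C \<inter> L" "P' \<in> C \<inter> L" using assms by auto
  then obtain x where x: "C \<inter> L = {x}" by (auto simp: card_1_singleton_iff)
  then have "P = x" "P' = x" using C by auto
  then show False using assms(3) by simp
qed

lemma card_Tg: "card Tg = q + 1"
proof -
  have U: "Tg = (\<Union>P\<in>L. {C \<in> G. card (C \<inter> L) = 1 \<and> P \<in> C})"
    unfolding Tg_def by (auto simp: card_1_singleton_iff)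
  have "card Tg = (\<Sum>P\<in>L. card {C \<in> G. card (C \<inter> L) = 1 \<and> P \<in> C})"
    unfolding U
    apply (rule card_UN_disjoint)
    using finite_subset[OF subL finP] apply simp
    using finG apply simp
    using tg_disj by blast
  then show ?thesis using tang_at cardL by simp
qed

lemma tg_meet: assumes "C \<in> Tg" "D \<in> Tg" "C \<noteq> D" shows "\<exists>x. C \<inter> D = {x} \<and> x \<in> Pts \<and> x \<notin> L"
proof -
  have "card (C \<inter> D) = 1" using assms inter1 unfolding Tg_def by auto
  then obtain x where x: "C \<inter> D = {x}" by (auto simp: card_1_singleton_iff)
  have "x \<notin> L"
  proof
    assume xL: "x \<in> L"
    define S where "S = {C \<in> G. card (C \<inter> L) = 1 \<and> x \<in> C}"
    have "C \<in> S" "D \<in> S" using assms x unfolding S_def Tg_def by auto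
    moreover obtain y where "S = {y}" using tang_at[OF xL] unfolding S_def[symmetric] by (auto simp: card_1_singleton_iff)
    ultimately show False using assms(3) by simp
  qed
  moreover have "x \<in> Pts" using x subG assms unfolding Tg_def by auto
  ultimately show ?thesis using x by auto
qed

definition "tc X = card {C \<in> Tg. X \<in> C}"

lemma parity: assumes X: "X \<in> Pts" "X \<notin> L" shows "even (tc X) \<longleftrightarrow> even (q + 1)"
proof -
  have U: "L = (\<Union>D\<in>thr X. D \<inter> L)"
    using cover_set[OF X(1) subL X(2)] .
  have "card L = (\<Sum>D\<in>thr X. card (D \<inter> L))"
    apply (subst U, rule card_UN_disjoint)
    using finthr apply simp
    using finC apply (simp add: thr_def)
    using X(2) by (intro ballI impI disj_thr2) auto
  then have "even (q+1) \<longleftrightarrow> even (card {D\<in>thr X. odd (card (D \<inter> L))})"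
    using cardL even_sum_iff[OF finthr] by simp
  also have "{D\<in>thr X. odd (card (D \<inter> L))} = {C \<in> Tg. X \<in> C}"
  proof -
    have "odd (card (D \<inter> L)) \<longleftrightarrow> card (D \<inter> L) = 1" if "D \<in> G" for D
      using sec[OF that] by (auto simp: le_Suc_eq numeral_2_eq_2)
    then show ?thesis unfolding thr_def Tg_def by auto
  qed
  finally show ?thesis unfolding tc_def by simp
qed

lemma finTg: "finite Tg" unfolding Tg_def using finG by simp

lemma sum1: "(\<Sum>X\<in>Pts - L. tc X) = q * (q + 1)"
proof -
  have "(\<Sum>X\<in>Pts - L. tc X) = (\<Sum>C\<in>Tg. card (id C \<inter> (Pts - L)))"
    unfolding tc_def using dcount[of "Pts - L" Tg id] finP finTg by simp
  also have "\<dots> = (\<Sum>C\<in>Tg. q)"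
  proof (rule sum.cong)
    fix C assume C: "C \<in> Tg"
    have "C \<inter> (Pts - L) = C - L" using subG C unfolding Tg_def by auto
    then show "card (id C \<inter> (Pts - L)) = q"
      using C cardC finC card_Diff_subset_Int[of C L] unfolding Tg_def by auto
  qed simp
  finally show ?thesis using card_Tg by simp
qed

lemma sum2: "(\<Sum>X\<in>Pts - L. tc X * (tc X - 1)) = q * (q + 1)"
proof -
  define I where "I = {(C,D)\<in>Tg\<times>Tg. C \<noteq> D}"
  have "I \<subseteq> Tg \<times> Tg" unfolding I_def by auto
  moreover have "finite (Tg \<times> Tg)" using finTg by simp
  ultimately have finI: "finite I" by (rule finite_subset)
  have "(\<Sum>X\<in>Pts - L. tc X * (tc X - 1)) = (\<Sum>X\<in>Pts - L. card {i\<in>I. X \<in> (\<lambda>(C,D). C \<inter> D) i})"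
  proof (rule sum.cong)
    fix X assume "X \<in> Pts - L"
    have "{i\<in>I. X \<in> (\<lambda>(C,D). C \<inter> D) i} = {(a,b)\<in>{C \<in> Tg. X \<in> C}\<times>{C \<in> Tg. X \<in> C}. a \<noteq> b}"
      unfolding I_def by auto
    then show "tc X * (tc X - 1) = card {i\<in>I. X \<in> (\<lambda>(C,D). C \<inter> D) i}"
      unfolding tc_def using offdiag_card[of "{C \<in> Tg. X \<in> C}"] finTg by simp
  qed simp
  also have "\<dots> = (\<Sum>i\<in>I. card ((\<lambda>(C,D). C \<inter> D) i \<inter> (Pts - L)))"
    using dcount finP finI by blast
  also have "\<dots> = (\<Sum>i\<in>I. 1)"
  proof (rule sum.cong)
    fix i assume "i \<in> I"
    then obtain C D where i: "i = (C,D)" "C \<in> Tg" "D \<in> Tg" "C \<noteq> D" unfolding I_def by auto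
    then obtain x where "C \<inter> D = {x}" "x \<in> Pts" "x \<notin> L" using tg_meet by blast
    then show "card ((\<lambda>(C,D). C \<inter> D) i \<inter> (Pts - L)) = 1" using i by auto
  qed simp
  also have "\<dots> = card Tg * (card Tg - 1)" unfolding I_def using offdiag_card[OF finTg] by simp
  finally show ?thesis using card_Tg by simp
qed

lemma int_tt: "int (n * (n - 1)) = int n * (int n - 1)"
  by (cases n) (auto simp: algebra_simps)

lemma odd_case: assumes "odd q" "X \<in> Pts" "X \<notin> L" shows "tc X = 0 \<or> tc X = 2"
proof -
  define A where "A = Pts - L"
  have finA: "finite A" unfolding A_def using finP by simp
  have eq1: "even (q + 1)" using assms(1) by simp
  have ev: "even (tc Y)" if "Y \<in> A" for Y
  proof -
    have "Y \<in> Pts" "Y \<notin> L" using that unfolding A_def by auto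
    then have "even (tc Y) \<longleftrightarrow> even (q + 1)" by (rule parity)
    then show ?thesis using eq1 by simp
  qed
  have s1: "(\<Sum>Y\<in>A. int (tc Y)) = int (q * (q+1))" unfolding A_def sum1[symmetric] by (rule of_nat_sum[symmetric])
  have s2: "(\<Sum>Y\<in>A. int (tc Y) * (int (tc Y) - 1)) = int (q * (q+1))"
    unfolding A_def int_tt[symmetric] sum2[symmetric] by (rule of_nat_sum[symmetric])
  have "(\<Sum>Y\<in>A. int (tc Y) * (int (tc Y) - 2)) = (\<Sum>Y\<in>A. int (tc Y) * (int (tc Y) - 1) - int (tc Y))"
    by (rule sum.cong) (simp_all add: algebra_simps)
  also have "\<dots> = (\<Sum>Y\<in>A. int (tc Y) * (int (tc Y) - 1)) - (\<Sum>Y\<in>A. int (tc Y))"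
    by (rule sum_subtractf)
  finally have z: "(\<Sum>Y\<in>A. int (tc Y) * (int (tc Y) - 2)) = 0" using s1 s2 by simp
  have nn: "0 \<le> int (tc Y) * (int (tc Y) - 2)" if "Y \<in> A" for Y
  proof -
    have "tc Y \<noteq> 1" using ev[OF that] by auto
    then have "tc Y = 0 \<or> tc Y \<ge> 2" by linarith
    then show ?thesis
    proof
      assume "tc Y = 0" then show ?thesis by simp
    next
      assume "tc Y \<ge> 2"
      then have "int (tc Y) \<ge> 0" "int (tc Y) - 2 \<ge> 0" by simp_all
      then show ?thesis by (rule mult_nonneg_nonneg)
    qed
  qed
  have "X \<in> A" unfolding A_def using assms by auto
  moreover have "\<forall>x\<in>A. int (tc x) * (int (tc x) - 2) = 0" using sum_nonneg_eq_0_iff[OF finA nn] z by simp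
  ultimately have "int (tc X) * (int (tc X) - 2) = 0" by blast
  then have "int (tc X) = 0 \<or> int (tc X) - 2 = 0" by (simp only: mult_eq_0_iff)
  then show ?thesis by linarith
qed

lemma even_case: assumes "even q" shows "\<exists>X\<in>Pts. \<forall>C\<in>Tg. X \<in> C"
proof -
  define A where "A = Pts - L"
  have finA: "finite A" unfolding A_def using finP by simp
  have "finite L" using finP subL by (rule finite_subset[rotated])
  then have cA: "card A = q * q" unfolding A_def using card_Diff_subset[OF _ subL] cardP cardL by simp
  have oq1: "\<not> even (q + 1)" using assms(1) by simp
  have od: "odd (tc Y)" if "Y \<in> A" for Y
  proof -
    have "Y \<in> Pts" "Y \<notin> L" using that unfolding A_def by auto
    then have "even (tc Y) \<longleftrightarrow> even (q + 1)" by (rule parity)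
    then show ?thesis using oq1 by simp
  qed
  define a where "a Y = int (tc Y) - 1" for Y
  have s1: "(\<Sum>Y\<in>A. int (tc Y)) = int (q * (q+1))" unfolding A_def sum1[symmetric] by (rule of_nat_sum[symmetric])
  have s2: "(\<Sum>Y\<in>A. int (tc Y) * (int (tc Y) - 1)) = int (q * (q+1))"
    unfolding A_def int_tt[symmetric] sum2[symmetric] by (rule of_nat_sum[symmetric])
  have "sum a A = (\<Sum>Y\<in>A. int (tc Y)) - (\<Sum>Y\<in>A. 1)" unfolding a_def by (rule sum_subtractf)
  also have "(\<Sum>Y\<in>A. (1::int)) = int (q * q)" using cA by simp
  finally have sa: "sum a A = int q" using s1 by (simp add: algebra_simps)
  have "(\<Sum>Y\<in>A. a Y * a Y) = (\<Sum>Y\<in>A. int (tc Y) * (int (tc Y) - 1) - a Y)"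
    by (rule sum.cong) (simp_all add: a_def algebra_simps)
  also have "\<dots> = (\<Sum>Y\<in>A. int (tc Y) * (int (tc Y) - 1)) - sum a A"
    by (rule sum_subtractf)
  finally have sq: "(\<Sum>Y\<in>A. a Y * a Y) = sum a A * sum a A" using s2 sa by (simp add: algebra_simps)
  have nn: "\<forall>Y\<in>A. a Y \<ge> 0"
  proof
    fix Y assume "Y \<in> A"
    then have o: "odd (tc Y)" by (rule od)
    have "tc Y \<noteq> 0"
    proof
      assume "tc Y = 0" with o show False by simp
    qed
    then show "a Y \<ge> 0" unfolding a_def by simp
  qed
  have qp: "sum a A > 0" using sa qpos by simp
  obtain X where X: "X \<in> A" "a X = sum a A" using sq_lemma[OF finA nn sq qp] by blast
  then have "a X = int q" using sa by simp
  then have "int (tc X) - 1 = int q" unfolding a_def .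
  then have "int (tc X) = int (q + 1)" by simp
  then have "tc X = q + 1" by (simp only: of_nat_eq_iff)
  then have "tc X = card Tg" using card_Tg by simp
  then have "{C \<in> Tg. X \<in> C} = Tg" unfolding tc_def using finTg by (intro card_subset_eq) auto
  then show ?thesis using X unfolding A_def by auto
qed

end



lemma smul3_simp[simp]: "smul3 c (x,y,z) = (c*x, c*y, c*z)" by (simp add: smul3_def)
lemma add3_simp[simp]: "add3 (x,y,z) (x',y',z') = (x+x', y+y', z+z')" by (simp add: add3_def)

lemma smul3_smul3: "smul3 c (smul3 d v) = smul3 (c*d) v" by (cases v) (auto simp: mult.assoc)
lemma smul3_zero: "smul3 0 v = zero3" by (cases v) (simp add: zero3_def)
lemma smul3_one: "smul3 1 v = v" by (cases v) simp

lemma smul3_inj: "v \<noteq> zero3 \<Longrightarrow> smul3 c v = smul3 d v \<Longrightarrow> c = d"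
  by (cases v) (auto simp: zero3_def)

lemma smul3_eq_zero: "v \<noteq> (zero3::'a::field vec3) \<Longrightarrow> smul3 c v = zero3 \<longleftrightarrow> c = 0"
  by (cases v) (auto simp: zero3_def)

lemma span1_card:
  assumes nz: "v \<noteq> (zero3::'a::{finite,field} vec3)"
  shows "card (span1 v - {zero3}) = CARD('a) - 1"
proof -
  have e: "span1 v - {zero3} = (\<lambda>c. smul3 c v) ` (UNIV - {0})"
  proof (intro equalityI subsetI)
    fix x assume "x \<in> span1 v - {zero3}"
    then obtain c where x: "x = smul3 c v" "x \<noteq> zero3" unfolding span1_def by blast
    then have "c \<noteq> 0" using smul3_eq_zero[OF nz, of c] by blast
    then show "x \<in> (\<lambda>c. smul3 c v) ` (UNIV - {0})" using x by blast
  next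
    fix x assume "x \<in> (\<lambda>c. smul3 c v) ` (UNIV - {0})"
    then obtain c where x: "c \<noteq> 0" "x = smul3 c v" by blast
    then have "x \<noteq> zero3" using smul3_eq_zero[OF nz, of c] by simp
    then show "x \<in> span1 v - {zero3}" unfolding span1_def using x by blast
  qed
  have i: "inj_on (\<lambda>c. smul3 c v) (UNIV - {0})"
    by (rule inj_onI) (rule smul3_inj[OF nz])
  have "card (span1 v - {zero3}) = card (UNIV - {0::'a})" unfolding e using i by (rule card_image)
  also have "\<dots> = CARD('a) - 1" by (rule card_Diff_singleton) simp
  finally show ?thesis .
qed

lemma span1_self: "v \<in> span1 v"
proof -
  have "v = smul3 1 v" by (simp add: smul3_one)
  then show ?thesis unfolding span1_def by blast
qed
lemma zero_span1: "zero3 \<in> span1 v"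
proof -
  have "zero3 = smul3 0 v" by (simp add: smul3_zero)
  then show ?thesis unfolding span1_def by blast
qed

lemma span1_eq:
  assumes x: "x \<in> span1 v" and nz: "x \<noteq> (zero3::'a::field vec3)"
  shows "span1 x = span1 v"
proof -
  obtain c where xc: "x = smul3 c v" using x by (auto simp: span1_def)
  have c: "c \<noteq> 0" using nz xc by (auto simp: smul3_zero)
  show ?thesis
  proof
    show "span1 x \<subseteq> span1 v" unfolding span1_def xc smul3_smul3 by blast
    show "span1 v \<subseteq> span1 x"
    proof
      fix y assume "y \<in> span1 v"
      then obtain e where y: "y = smul3 e v" by (auto simp: span1_def)
      have "y = smul3 (e / c) x" unfolding y xc smul3_smul3 using c by simp
      then show "y \<in> span1 x" unfolding span1_def by blast
    qed
  qed
qed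

lemma span1_sub: assumes "\<And>c x. x \<in> S \<Longrightarrow> smul3 c x \<in> S" "v \<in> S" shows "span1 v \<subseteq> S"
  using assms unfolding span1_def by blast

lemma count_pts:
  fixes S :: "'a::{finite,field} vec3 set"
  assumes cl: "\<And>c x. x \<in> S \<Longrightarrow> smul3 c x \<in> S" and z: "zero3 \<in> S"
  shows "(CARD('a) - 1) * card {span1 v | v. v \<in> S \<and> v \<noteq> zero3} = card S - 1"
proof -
  define Pt where "Pt = {span1 v | v. v \<in> S \<and> v \<noteq> zero3}"
  define C where "C = (\<lambda>P. P - {zero3}) ` Pt"
  have U: "\<Union>C = S - {zero3}"
  proof
    show "\<Union>C \<subseteq> S - {zero3}" unfolding C_def Pt_def using span1_sub[OF cl] by blast
    show "S - {zero3} \<subseteq> \<Union>C"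
    proof
      fix x assume "x \<in> S - {zero3}"
      then show "x \<in> \<Union>C" unfolding C_def Pt_def using span1_self[of x] by blast
    qed
  qed
  have cards: "\<forall>c\<in>C. card c = CARD('a) - 1" unfolding C_def Pt_def using span1_card by auto
  have disj: "\<forall>c1\<in>C. \<forall>c2\<in>C. c1 \<noteq> c2 \<longrightarrow> c1 \<inter> c2 = {}"
  proof (intro ballI impI)
    fix c1 c2 assume c1: "c1 \<in> C" and c2: "c2 \<in> C" and ne: "c1 \<noteq> c2"
    obtain v where v: "c1 = span1 v - {zero3}" using c1 unfolding C_def Pt_def by auto
    obtain w where w: "c2 = span1 w - {zero3}" using c2 unfolding C_def Pt_def by auto
    show "c1 \<inter> c2 = {}"
    proof (rule ccontr)
      assume "c1 \<inter> c2 \<noteq> {}"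
      then obtain x where "x \<in> span1 v" "x \<in> span1 w" "x \<noteq> zero3" using v w by auto
      then have "span1 v = span1 w" using span1_eq by metis
      then show False using ne v w by simp
    qed
  qed
  have "(CARD('a) - 1) * card C = card (\<Union>C)"
    by (rule card_partition) (use cards disj in auto)
  moreover have "card C = card Pt"
  proof -
    have "inj_on (\<lambda>P. P - {zero3}) Pt"
    proof (rule inj_onI)
      fix P Q assume "P \<in> Pt" "Q \<in> Pt" "P - {zero3} = Q - {zero3}"
      moreover have "zero3 \<in> P" "zero3 \<in> Q" using \<open>P \<in> Pt\<close> \<open>Q \<in> Pt\<close> zero_span1 unfolding Pt_def by auto
      ultimately show "P = Q" by blast
    qed
    then show ?thesis unfolding C_def by (rule card_image)
  qed
  moreover have "card (S - {zero3}) = card S - 1" using z by simp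
  ultimately show ?thesis unfolding Pt_def U by simp
qed

lemma card_ge2: "CARD('a::{finite,field}) \<ge> 2"
proof -
  have "card {0::'a, 1} \<le> CARD('a)" by (rule card_mono) auto
  then show ?thesis by simp
qed

lemma card_points: "card (pg_points :: 'a::{finite,field} vec3 set set) = CARD('a) * CARD('a) + CARD('a) + 1"
proof -
  define q where "q = CARD('a)"
  have q2: "q \<ge> 2" unfolding q_def by (rule card_ge2)
  have e: "(pg_points :: 'a vec3 set set) = {span1 v | v. v \<in> UNIV \<and> v \<noteq> zero3}"
    unfolding pg_points_def by simp
  have "(CARD('a) - 1) * card {span1 v |v. v \<in> (UNIV::'a vec3 set) \<and> v \<noteq> zero3} = card (UNIV::'a vec3 set) - 1"
    by (rule count_pts) auto
  then have "(q - 1) * card (pg_points :: 'a vec3 set set) = q * (q * q) - 1"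
    unfolding e[symmetric] q_def by simp
  moreover have "(q - 1) * (q * q + q + 1) = q * (q * q) - 1"
    using q2 by (cases q) (auto simp: algebra_simps)
  ultimately have eq: "(q - 1) * card (pg_points :: 'a vec3 set set) = (q - 1) * (q * q + q + 1)" by simp
  have "q - 1 \<noteq> 0" using q2 by simp
  then have "card (pg_points :: 'a vec3 set set) = q * q + q + 1" using mult_left_cancel eq by blast
  then show ?thesis unfolding q_def .
qed

lemma span2_smul:
  "smul3 c (add3 (smul3 s u) (smul3 t w)) = add3 (smul3 (c*s) u) (smul3 (c*t) (w::'a::field vec3))"
  by (cases u, cases w) (simp add: algebra_simps)

lemma lin_comb_diff:
  assumes "lin_indep2 u w" "add3 (smul3 s u) (smul3 t w) = add3 (smul3 s' u) (smul3 t' (w::'a::field vec3))"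
  shows "s = s' \<and> t = t'"
proof -
  have "add3 (smul3 (s-s') u) (smul3 (t-t') w) = add3 (add3 (smul3 s u) (smul3 t w)) (smul3 (-1) (add3 (smul3 s' u) (smul3 t' w)))"
    by (cases u, cases w) (simp add: algebra_simps)
  also have "\<dots> = zero3" unfolding assms(2) by (cases u, cases w) (simp add: zero3_def)
  finally show ?thesis using assms(1) unfolding lin_indep2_def by force
qed

lemma card_line_pts:
  assumes l: "l \<in> (pg_lines :: 'a::{finite,field} vec3 set set)"
  shows "card (on_line pg_points l) = CARD('a) + 1"
proof -
  define q where "q = CARD('a)"
  have q2: "q \<ge> 2" unfolding q_def by (rule card_ge2)
  obtain u w where uw: "l = span2 u w" "lin_indep2 u w" using l unfolding pg_lines_def by auto
  have cl: "smul3 c x \<in> l" if xl: "x \<in> l" for c x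
  proof -
    obtain s t where x: "x = add3 (smul3 s u) (smul3 t w)" using xl unfolding uw span2_def by blast
    have "smul3 c x = add3 (smul3 (c*s) u) (smul3 (c*t) w)" unfolding x by (rule span2_smul)
    then show ?thesis unfolding uw span2_def by blast
  qed
  have z: "zero3 \<in> l" unfolding uw span2_def
  proof -
    have "zero3 = add3 (smul3 0 u) (smul3 0 w)" by (cases u, cases w) (simp add: zero3_def)
    then show "zero3 \<in> {add3 (smul3 s u) (smul3 t w) |s t. True}" by blast
  qed
  have cl_card: "card l = q * q"
  proof -
    have "l = (\<lambda>(s,t). add3 (smul3 s u) (smul3 t w)) ` UNIV"
    proof (intro equalityI subsetI)
      fix x assume "x \<in> l"
      then obtain s t where "x = add3 (smul3 s u) (smul3 t w)" unfolding uw span2_def by blast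
      then show "x \<in> (\<lambda>(s,t). add3 (smul3 s u) (smul3 t w)) ` UNIV"
        by (intro image_eqI[of _ _ "(s,t)"]) simp_all
    next
      fix x assume "x \<in> (\<lambda>(s,t). add3 (smul3 s u) (smul3 t w)) ` UNIV"
      then obtain s t where "x = add3 (smul3 s u) (smul3 t w)" by auto
      then show "x \<in> l" unfolding uw span2_def by blast
    qed
    moreover have "inj (\<lambda>(s,t). add3 (smul3 s u) (smul3 t w))"
    proof (rule injI)
      fix a b :: "'a \<times> 'a"
      assume h: "(\<lambda>(s,t). add3 (smul3 s u) (smul3 t w)) a = (\<lambda>(s,t). add3 (smul3 s u) (smul3 t w)) b"
      obtain s t s' t' where ab: "a = (s,t)" "b = (s',t')" using surj_pair[of a] surj_pair[of b] by blast
      have "add3 (smul3 s u) (smul3 t w) = add3 (smul3 s' u) (smul3 t' w)" using h unfolding ab by simp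
      then show "a = b" using lin_comb_diff[OF uw(2)] ab by simp
    qed
    ultimately show ?thesis unfolding q_def by (simp add: card_image)
  qed
  have e: "on_line pg_points l = {span1 v | v. v \<in> l \<and> v \<noteq> zero3}"
  proof (intro equalityI subsetI)
    fix P assume "P \<in> on_line pg_points l"
    then obtain v where v: "P = span1 v" "v \<noteq> zero3" "P \<subseteq> l" unfolding on_line_def pg_points_def by blast
    then have "v \<in> l" using span1_self[of v] by blast
    then show "P \<in> {span1 v | v. v \<in> l \<and> v \<noteq> zero3}" using v by blast
  next
    fix P assume "P \<in> {span1 v | v. v \<in> l \<and> v \<noteq> zero3}"
    then obtain v where v: "P = span1 v" "v \<noteq> zero3" "v \<in> l" by blast
    then have "P \<subseteq> l" using span1_sub[OF cl] by blast
    moreover have "P \<in> pg_points" unfolding pg_points_def using v by blast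
    ultimately show "P \<in> on_line pg_points l" unfolding on_line_def by blast
  qed
  have "(CARD('a) - 1) * card {span1 v | v. v \<in> l \<and> v \<noteq> zero3} = card l - 1"
    by (rule count_pts[OF cl z])
  then have "(q - 1) * card (on_line pg_points l) = q * q - 1"
    unfolding e[symmetric] cl_card q_def .
  moreover have "(q - 1) * (q + 1) = q * q - 1"
    using q2 by (cases q) (auto simp: algebra_simps)
  ultimately have eq: "(q - 1) * card (on_line pg_points l) = (q - 1) * (q + 1)" by simp
  have "q - 1 \<noteq> 0" using q2 by simp
  then have "card (on_line pg_points l) = q + 1" using mult_left_cancel eq by blast
  then show ?thesis unfolding q_def .
qed


theorem lemma4p6:
  fixes \<Gamma> :: "'a::{finite,field} vec3 set set set"
    and l :: "'a vec3 set"
  assumes "projective_bundle \<Gamma>"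
    and "l \<in> pg_lines"
  shows "card {C \<in> \<Gamma>. tangent C l} = CARD('a) + 1
    \<and> (\<forall>P \<in> on_line pg_points l. \<exists>!C. C \<in> \<Gamma> \<and> tangent C l \<and> P \<in> C)
    \<and> (even (CARD('a)) \<longrightarrow> (\<exists>P \<in> pg_points. \<forall>C \<in> {C \<in> \<Gamma>. tangent C l}. P \<in> C))
    \<and> (odd (CARD('a)) \<longrightarrow> (\<forall>P \<in> pg_points. \<not> P \<subseteq> l \<longrightarrow>
          card {C \<in> \<Gamma>. tangent C l \<and> P \<in> C} = 0 \<or> card {C \<in> \<Gamma>. tangent C l \<and> P \<in> C} = 2))"
proof -
  define q where "q = CARD('a)"
  define L where "L = on_line (pg_points::'a vec3 set set) l"
  have pb0: "(\<forall>C\<in>\<Gamma>. is_oval C) \<and> card \<Gamma> = CARD('a)^2 + CARD('a) + 1 \<and>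
     (\<forall>C1\<in>\<Gamma>. \<forall>C2\<in>\<Gamma>. C1 \<noteq> C2 \<longrightarrow> card (C1 \<inter> C2) = 1)"
    using assms(1) unfolding projective_bundle_def .
  then have ov: "is_oval C" if "C \<in> \<Gamma>" for C using that by blast
  have cG: "card \<Gamma> = q*q + q + 1" using pb0 unfolding q_def power2_eq_square by blast
  have i1: "card (C1 \<inter> C2) = 1" if "C1 \<in> \<Gamma>" "C2 \<in> \<Gamma>" "C1 \<noteq> C2" for C1 C2 using pb0 that by blast
  have ov2: "C \<subseteq> pg_points \<and> card C = q + 1 \<and> (\<forall>l \<in> pg_lines. card (on_line C l) \<le> 2)" if "C \<in> \<Gamma>" for C
    using ov[OF that] unfolding is_oval_def q_def .
  have onl: "on_line C l = C \<inter> L" if "C \<subseteq> pg_points" for C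
    using that unfolding L_def on_line_def by blast
  have sub: "C \<subseteq> pg_points" if "C \<in> \<Gamma>" for C using ov2[OF that] by blast
  have tan: "tangent C l \<longleftrightarrow> card (C \<inter> L) = 1" if "C \<in> \<Gamma>" for C
    unfolding tangent_def onl[OF sub[OF that]] ..
  have q1: "q \<ge> 1" using card_ge2[where 'a='a] unfolding q_def by linarith
  interpret B: babs pg_points \<Gamma> L q
  proof
    show "finite (pg_points :: 'a vec3 set set)" by simp
    show "card (pg_points :: 'a vec3 set set) = q*q+q+1" unfolding q_def by (rule card_points)
    show "C \<subseteq> pg_points" if "C \<in> \<Gamma>" for C using sub[OF that] .
    show "card C = q+1" if "C \<in> \<Gamma>" for C using ov2[OF that] by blast
    show "card \<Gamma> = q*q+q+1" by (rule cG)
    show "card (C \<inter> D) = 1" if "C \<in> \<Gamma>" "D \<in> \<Gamma>" "C \<noteq> D" for C D using i1[OF that] .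
    show "L \<subseteq> pg_points" unfolding L_def on_line_def by blast
    show "card L = q+1" unfolding L_def q_def by (rule card_line_pts[OF assms(2)])
    show "card (C \<inter> L) \<le> 2" if "C \<in> \<Gamma>" for C
    proof -
      have "card (on_line C l) \<le> 2" using ov2[OF that] assms(2) by blast
      then show ?thesis unfolding onl[OF sub[OF that]] .
    qed
    show "q \<ge> 1" by (rule q1)
  qed
  have T: "{C \<in> \<Gamma>. tangent C l} = B.Tg" unfolding B.Tg_def
    by (rule Collect_cong) (use tan in blast)
  show ?thesis
  proof (intro conjI)
    show "card {C \<in> \<Gamma>. tangent C l} = CARD('a) + 1" unfolding T B.card_Tg q_def ..
    show "\<forall>P\<in>on_line pg_points l. \<exists>!C. C \<in> \<Gamma> \<and> tangent C l \<and> P \<in> C"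
    proof
      fix P assume "P \<in> on_line pg_points l"
      then have "P \<in> L" unfolding L_def .
      then have ex: "\<exists>!C. C \<in> \<Gamma> \<and> card (C \<inter> L) = 1 \<and> P \<in> C" by (rule B.tang_unique)
      have eqv: "(C \<in> \<Gamma> \<and> tangent C l \<and> P \<in> C) \<longleftrightarrow> (C \<in> \<Gamma> \<and> card (C \<inter> L) = 1 \<and> P \<in> C)" for C
        using tan by blast
      show "\<exists>!C. C \<in> \<Gamma> \<and> tangent C l \<and> P \<in> C" unfolding eqv by (rule ex)
    qed
    show "even (CARD('a)) \<longrightarrow> (\<exists>P \<in> pg_points. \<forall>C \<in> {C \<in> \<Gamma>. tangent C l}. P \<in> C)"
    proof
      assume "even (CARD('a))"
      then have "even q" unfolding q_def .
      then show "\<exists>P \<in> pg_points. \<forall>C \<in> {C \<in> \<Gamma>. tangent C l}. P \<in> C" unfolding T by (rule B.even_case)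
    qed
    show "odd (CARD('a)) \<longrightarrow> (\<forall>P \<in> pg_points. \<not> P \<subseteq> l \<longrightarrow>
          card {C \<in> \<Gamma>. tangent C l \<and> P \<in> C} = 0 \<or> card {C \<in> \<Gamma>. tangent C l \<and> P \<in> C} = 2)"
    proof (intro impI ballI)
      fix P :: "'a vec3 set"
      assume o: "odd (CARD('a))" and P: "P \<in> pg_points" and nl: "\<not> P \<subseteq> l"
      have PL: "P \<notin> L" using nl unfolding L_def on_line_def by blast
      have oq: "odd q" using o unfolding q_def .
      have "{C \<in> \<Gamma>. tangent C l \<and> P \<in> C} = {C \<in> B.Tg. P \<in> C}" unfolding B.Tg_def
        by (rule Collect_cong) (use tan in blast)
      moreover have "B.tc P = 0 \<or> B.tc P = 2" by (rule B.odd_case[OF oq P PL])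
      ultimately show "card {C \<in> \<Gamma>. tangent C l \<and> P \<in> C} = 0 \<or> card {C \<in> \<Gamma>. tangent C l \<and> P \<in> C} = 2"
        unfolding B.tc_def by simp
    qed
  qed
qed



end
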